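(* Let $Z_0>0$, let $\mathbf Z_{AA}\in\mathbb C^{M\times M}$ be complex symmetric with $\mathbf R:=\operatorname{Re}\{\mathbf Z_{AA}\}$ positive definite, and let $\mathbf Z_A\in\mathbb C^{M\times M}$ be diagonal with $\mathbf Z_A$ and $\mathbf Z_A+Z_0\mathbf I_M$ invertible. Set $\boldsymbol\Gamma_A=(\mathbf Z_A+Z_0\mathbf I_M)^{-1}(\mathbf Z_A-Z_0\mathbf I_M)$, $\tilde{\boldsymbol\Gamma}_A=\boldsymbol\Gamma_A+\mathbf I_M$, and $\mathbf Z_A^D=-j\operatorname{Im}\{\mathbf Z_{AA}\}+Z_0\mathbf R^{1/2}\mathbf Z_A^{-1}\mathbf R^{1/2}$. Then $\mathbf Z_A^D+\mathbf Z_{AA}$ is invertible, and for arbitrary $\mathbf Z_{BU,k}\in\mathbb C^{1\times N}$, $\mathbf Z_{RU,k}\in\mathbb C^{1\times M}$, $\mathbf Z_{BR}\in\mathbb C^{M\times N}$, $\mathbf Z_{JU,qk}\in\mathbb C^{1\times N_J}$, $\mathbf Z_{JR,q}\in\mathbb C^{M\times N_J}$, writing $\mathbf W:=(\mathbf Z_A^D+\mathbf Z_{AA})^{-1}$: $$\tfrac{1}{2Z_0}\big(\mathbf Z_{BU,k}-\mathbf Z_{RU,k}\mathbf W\mathbf Z_{BR}\big)=\tfrac{1}{2Z_0}\big(\mathbf Z_{BU,k}-\tfrac12\tilde{\mathbf Z}_{RU,k}\tilde{\boldsymbol\Gamma}_A\tilde{\mathbf Z}_{BR}\big),$$ $$\tfrac{1}{2Z_0}\big(\mathbf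 Z_{JU,qk}-\mathbf Z_{RU,k}\mathbf W\mathbf Z_{JR,q}\big)=\tfrac{1}{2Z_0}\big(\mathbf Z_{JU,qk}-\tfrac12\tilde{\mathbf Z}_{RU,k}\tilde{\boldsymbol\Gamma}_A\tilde{\mathbf Z}_{JR,q}\big),$$ $$\tfrac{1}{2Z_0}\mathbf Z_{RU,k}\big(\mathbf I_M-\mathbf W\mathbf Z_{AA}^+\big)=\tfrac{1}{2Z_0}\big(\mathbf Z_{RU,k}-\tfrac12\tilde{\mathbf Z}_{RU,k}\tilde{\boldsymbol\Gamma}_A\bar{\mathbf Z}_{AA}\big),$$ $$\tfrac{1}{2Z_0}\big(\mathbf Z_{BR}-\mathbf Z_{AA}^+\mathbf W\mathbf Z_{BR}\big)=\tfrac{1}{2Z_0}\big(\mathbf Z_{BR}-\tfrac12\tilde{\mathbf Z}_{AA}\tilde{\boldsymbol\Gamma}_A\tilde{\mathbf Z}_{BR}\big),$$ $$\tfrac{1}{2Z_0}\big(\mathbf Z_{JR,q}-\mathbf Z_{AA}^+\mathbf W\mathbf Z_{JR,q}\big)=\tfrac{1}{2Z_0}\big(\mathbf Z_{JR,q}-\tfrac12\tilde{\mathbf Z}_{AA}\tilde{\boldsymbol\Gamma}_A\tilde{\mathbf Z}_{JR,q}\big),$$ $$\tfrac{1}{2Z_0}\big(\mathbf Z_{AA}^+-\mathbf Z_{AA}^+\mathbf W\mathbf Z_{AA}^+\big)=\tfrac{1}{2Z_0}\big(\mathbf Z_{AA}^+-\tfrac12\tilde{\mathbf Z}_{AA}\tilde{\boldsymbol\Gamma}_A\bar{\mathbf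 Z}_{AA}\big).$$ That is, replacing $\mathbf Z_A$ by $\mathbf Z_A^D$ in the $Z$-parameter channels $\mathbf H^E_{Z,k},\mathbf H^J_{Z,qk},\mathbf H^N_{Z,k},\breve{\mathbf H}^E_Z,\breve{\mathbf H}^J_{Z,q},\breve{\mathbf H}^N_Z$ yields the right-hand sides above.
   Context: $\mathbf Z_{AA}^+=\mathbf Z_{AA}+Z_0\mathbf I_M$; $\mathbf R^{1/2}$ is the symmetric positive definite square root of $\mathbf R=\operatorname{Re}\{\mathbf Z_{AA}\}$ and $\mathbf R^{-1/2}$ its inverse. Notation: $\tilde{\mathbf Z}_{RU,k}=\mathbf Z_{RU,k}\mathbf R^{-1/2}$, $\tilde{\mathbf Z}_{BR}=\mathbf R^{-1/2}\mathbf Z_{BR}$, $\tilde{\mathbf Z}_{JR,q}=\mathbf R^{-1/2}\mathbf Z_{JR,q}$, $\bar{\mathbf Z}_{AA}=\mathbf R^{-1/2}\mathbf Z_{AA}^+$, $\tilde{\mathbf Z}_{AA}=\mathbf Z_{AA}^+\mathbf R^{-1/2}$. The $Z$-parameter channels (for a load $\mathbf Z_A$) are $\mathbf H^E_{Z,k}=\frac{1}{2Z_0}(\mathbf Z_{BU,k}-\mathbf Z_{RU,k}(\mathbf Z_A+\mathbf Z_{AA})^{-1}\mathbf Z_{BR})$, $\mathbf H^J_{Z,qk}=\frac{1}{2Z_0}(\mathbf Z_{JU,qk}-\mathbf Z_{RU,k}(\mathbf Z_A+\mathbf Z_{AA})^{-1}\mathbf Z_{JR,q})$, $\mathbf H^N_{Z,k}=\frac{1}{2Z_0}\mathbf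 Z_{RU,k}(\mathbf I_M-(\mathbf Z_A+\mathbf Z_{AA})^{-1}\mathbf Z_{AA}^+)$, $\breve{\mathbf H}^E_Z=\frac{1}{2Z_0}(\mathbf Z_{BR}-\mathbf Z_{AA}^+(\mathbf Z_A+\mathbf Z_{AA})^{-1}\mathbf Z_{BR})$, $\breve{\mathbf H}^J_{Z,q}=\frac{1}{2Z_0}(\mathbf Z_{JR,q}-\mathbf Z_{AA}^+(\mathbf Z_A+\mathbf Z_{AA})^{-1}\mathbf Z_{JR,q})$, $\breve{\mathbf H}^N_Z=\frac{1}{2Z_0}(\mathbf Z_{AA}^+-\mathbf Z_{AA}^+(\mathbf Z_A+\mathbf Z_{AA})^{-1}\mathbf Z_{AA}^+)$. $\mathbf Z_A^D$ is the load impedance seen by the RIS elements when a power-matching decoupling network is inserted in front of the loads $\mathbf Z_A$. *)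

theory Defs
  imports "HOL-Analysis.Analysis"
begin

text \<open>Complex matrices are rendered as \<open>complex^'c^'r\<close> (r rows, c columns);
  the size-1 dimension of row vectors is the numeral type \<open>1\<close>.\<close>

definition cmsc :: "complex \<Rightarrow> complex^'c^'r \<Rightarrow> complex^'c^'r" where
  "cmsc c A = (\<chi> i j. c * A$i$j)"

definition cre :: "complex^'c^'r \<Rightarrow> real^'c^'r" where
  "cre A = (\<chi> i j. Re (A$i$j))"

definition cim :: "complex^'c^'r \<Rightarrow> real^'c^'r" where
  "cim A = (\<chi> i j. Im (A$i$j))"

definition cof :: "real^'c^'r \<Rightarrow> complex^'c^'r" where
  "cof A = (\<chi> i j. complex_of_real (A$i$j))"

definition is_diag :: "'a::zero^'n^'n \<Rightarrow> bool" where
  "is_diag A \<longleftrightarrow> (\<forall>i j. i \<noteq> j \<longrightarrow> A$i$j = 0)"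

definition real_pos_def :: "real^'n^'n \<Rightarrow> bool" where
  "real_pos_def A \<longleftrightarrow> transpose A = A \<and> (\<forall>x. x \<noteq> 0 \<longrightarrow> x \<bullet> (A *v x) > 0)"

definition ZAAp :: "real \<Rightarrow> complex^'m^'m \<Rightarrow> complex^'m^'m" where
  "ZAAp Z0 ZAA = ZAA + mat (complex_of_real Z0)"

definition GammaA :: "real \<Rightarrow> complex^'m^'m \<Rightarrow> complex^'m^'m" where
  "GammaA Z0 ZA = matrix_inv (ZA + mat (complex_of_real Z0)) ** (ZA - mat (complex_of_real Z0))"

definition GammaAt :: "real \<Rightarrow> complex^'m^'m \<Rightarrow> complex^'m^'m" where
  "GammaAt Z0 ZA = GammaA Z0 ZA + mat 1"

text \<open>\<open>Z_A^D = -j Im Z_AA + Z0 R^{1/2} Z_A^{-1} R^{1/2}\<close>, with \<open>Rh\<close> the square root \<open>R^{1/2}\<close>.\<close>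
definition ZAD :: "real \<Rightarrow> complex^'m^'m \<Rightarrow> real^'m^'m \<Rightarrow> complex^'m^'m \<Rightarrow> complex^'m^'m" where
  "ZAD Z0 ZAA Rh ZA = cmsc (- \<i>) (cof (cim ZAA))
      + cmsc (complex_of_real Z0) (cof Rh ** matrix_inv ZA ** cof Rh)"

end

theory Submission
  imports Defs
begin


lemma cmsc_mult_left: "cmsc c (A ** B) = cmsc c A ** B"
  by (simp add: cmsc_def matrix_matrix_mult_def vec_eq_iff sum_distrib_left mult.assoc)

lemma cmsc_mult_right: "A ** cmsc c B = cmsc c (A ** B)"
  by (simp add: cmsc_def matrix_matrix_mult_def vec_eq_iff sum_distrib_left mult_ac)

lemma cmsc_cmsc: "cmsc a (cmsc b A) = cmsc (a*b) A"
  by (simp add: cmsc_def vec_eq_iff)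

lemma cmsc_one: "cmsc 1 A = A"
  by (simp add: cmsc_def vec_eq_iff)

lemma cmsc_add: "cmsc c (A + B) = cmsc c A + cmsc c B"
  by (simp add: cmsc_def vec_eq_iff algebra_simps)

lemma mat_cmsc: "mat c = cmsc c (mat 1)"
  by (simp add: cmsc_def mat_def vec_eq_iff)

lemma add_self_cmsc: "A + A = cmsc 2 A"
  by (simp add: cmsc_def vec_eq_iff)

lemma matrix_sub_ldistrib: "(A::'a::ring_1^'n^'m) ** (B - C) = A ** B - A ** C"
  by (simp add: matrix_matrix_mult_def vec_eq_iff sum_subtractf algebra_simps)

lemma matrix_add_rdistrib': "((B::'a::semiring_1^'n^'m) + C) ** A = B ** A + C ** A"
  by (simp add: matrix_matrix_mult_def vec_eq_iff sum.distrib algebra_simps)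

lemma cof_mult: "cof (A ** B) = cof A ** cof B"
  by (simp add: cof_def matrix_matrix_mult_def vec_eq_iff)

lemma cof_mat1: "cof (mat 1) = mat 1"
  by (simp add: cof_def mat_def vec_eq_iff)

lemma inv_props:
  assumes "invertible (A::'a::semiring_1^'n^'m)"
  shows "A ** matrix_inv A = mat 1" "matrix_inv A ** A = mat 1"
proof -
  have "\<exists>A'. A ** A' = mat 1 \<and> A' ** A = mat 1" using assms by (simp add: invertible_def)
  from someI_ex[OF this] show "A ** matrix_inv A = mat 1" "matrix_inv A ** A = mat 1"
    by (simp_all add: matrix_inv_def)
qed

lemma inv_unique:
  assumes "(B::'a::comm_semiring_1^'n^'n) ** A = mat 1" "invertible A"
  shows "matrix_inv A = B"
proof -
  have "B = B ** (A ** matrix_inv A)" using inv_props(1)[OF assms(2)] by simp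
  also have "\<dots> = matrix_inv A" by (simp add: matrix_mul_assoc assms(1))
  finally show ?thesis by simp
qed

lemma key:
  assumes "W = Rmh ** iP ** ZA ** Rmh" "G = cmsc 2 (iP ** ZA)"
  shows "cmsc (1/2) ((X ** Rmh) ** G ** (Rmh ** Y)) = X ** W ** (Y::complex^'b^'m)"
  using assms by (simp add: cmsc_mult_left cmsc_mult_right cmsc_cmsc cmsc_one matrix_mul_assoc)

theorem theorem2:
  fixes Z0 :: real
    and ZAA ZA :: "complex^'m^'m"
    and Rh :: "real^'m^'m"
    and ZBU :: "complex^'n^1" and ZRU :: "complex^'m^1" and ZBR :: "complex^'n^'m"
    and ZJU :: "complex^'j^1" and ZJR :: "complex^'j^'m"
  assumes Z0_pos: "Z0 > 0"
    and ZAA_sym: "transpose ZAA = ZAA"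
    and R_pd: "real_pos_def (cre ZAA)"
    and Rh_sqrt: "real_pos_def Rh" "Rh ** Rh = cre ZAA"
    and ZA_diag: "is_diag ZA"
    and ZA_inv: "invertible ZA"
    and ZA_Z0_inv: "invertible (ZA + mat (complex_of_real Z0))"
  shows "invertible (ZAD Z0 ZAA Rh ZA + ZAA) \<and>
    (let W = matrix_inv (ZAD Z0 ZAA Rh ZA + ZAA);
         c = complex_of_real (1 / (2 * Z0));
         Rmh = matrix_inv (cof Rh);
         G = GammaAt Z0 ZA;
         ZAAP = ZAAp Z0 ZAA;
         tZRU = ZRU ** Rmh; tZBR = Rmh ** ZBR; tZJR = Rmh ** ZJR;
         bZAA = Rmh ** ZAAP; tZAA = ZAAP ** Rmh
     in cmsc c (ZBU - ZRU ** W ** ZBR) = cmsc c (ZBU - cmsc (1/2) (tZRU ** G ** tZBR))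
      \<and> cmsc c (ZJU - ZRU ** W ** ZJR) = cmsc c (ZJU - cmsc (1/2) (tZRU ** G ** tZJR))
      \<and> cmsc c (ZRU ** (mat 1 - W ** ZAAP)) = cmsc c (ZRU - cmsc (1/2) (tZRU ** G ** bZAA))
      \<and> cmsc c (ZBR - ZAAP ** W ** ZBR) = cmsc c (ZBR - cmsc (1/2) (tZAA ** G ** tZBR))
      \<and> cmsc c (ZJR - ZAAP ** W ** ZJR) = cmsc c (ZJR - cmsc (1/2) (tZAA ** G ** tZJR))
      \<and> cmsc c (ZAAP - ZAAP ** W ** ZAAP) = cmsc c (ZAAP - cmsc (1/2) (tZAA ** G ** bZAA)))"
proof -
  define Rc where "Rc = cof Rh"
  define Rmh where "Rmh = matrix_inv Rc"
  define P where "P = ZA + mat (complex_of_real Z0)"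
  define iP where "iP = matrix_inv P"
  define iZ where "iZ = matrix_inv ZA"
  define S where "S = ZAD Z0 ZAA Rh ZA + ZAA"
  define G where "G = GammaAt Z0 ZA"
  define W' where "W' = Rmh ** iP ** ZA ** Rmh"
  have "\<forall>x. Rh *v x = 0 \<longrightarrow> x = 0"
  proof (intro allI impI)
    fix x assume "Rh *v x = 0"
    then show "x = 0" using Rh_sqrt(1) unfolding real_pos_def_def
      by (metis inner_zero_right less_irrefl)
  qed
  then obtain B where "B ** Rh = mat 1" using matrix_left_invertible_ker by blast
  then have "cof B ** Rc = mat 1" by (simp add: Rc_def cof_mult[symmetric] cof_mat1)
  then have Rc_inv: "invertible Rc" using invertible_left_inverse by blast
  have S_eq: "S = Rc ** (mat 1 + cmsc (complex_of_real Z0) iZ) ** Rc"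
  proof -
    have "S = cof (cre ZAA) + cmsc (complex_of_real Z0) (Rc ** iZ ** Rc)"
      by (simp add: S_def ZAD_def Rc_def iZ_def cmsc_def cof_def cim_def cre_def vec_eq_iff complex_eq_iff)
    also have "cof (cre ZAA) = Rc ** Rc" using Rh_sqrt(2) by (simp add: Rc_def cof_mult[symmetric])
    finally show ?thesis
      by (simp add: matrix_add_ldistrib matrix_add_rdistrib' cmsc_mult_left cmsc_mult_right matrix_mul_assoc)
  qed
  have G_eq: "G = cmsc 2 (iP ** ZA)"
  proof -
    have "G = iP ** (ZA - mat (complex_of_real Z0)) + iP ** P"
      using inv_props(2)[OF ZA_Z0_inv] by (simp add: G_def GammaAt_def GammaA_def iP_def P_def)
    also have "\<dots> = iP ** (ZA + ZA)"
      by (simp add: matrix_add_ldistrib[symmetric] P_def)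
    finally show ?thesis by (simp add: add_self_cmsc cmsc_mult_right)
  qed
  have "W' ** S = mat 1"
  proof -
    have "ZA ** (mat 1 + cmsc (complex_of_real Z0) iZ) = P"
      using inv_props(1)[OF ZA_inv]
      by (simp add: matrix_add_ldistrib cmsc_mult_right iZ_def P_def mat_cmsc[of "complex_of_real Z0"])
    moreover have "W' ** S = Rmh ** iP ** (ZA ** (Rmh ** Rc) ** (mat 1 + cmsc (complex_of_real Z0) iZ)) ** Rc"
      by (simp only: W'_def S_eq matrix_mul_assoc)
    ultimately have "W' ** S = Rmh ** (iP ** P) ** Rc"
      by (simp add: Rmh_def inv_props[OF Rc_inv] matrix_mul_assoc)
    also have "\<dots> = mat 1"
      by (simp add: iP_def P_def inv_props[OF ZA_Z0_inv] Rmh_def inv_props[OF Rc_inv])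
    finally show ?thesis .
  qed
  then have S_inv: "invertible S" using invertible_left_inverse by blast
  have W_eq: "matrix_inv S = W'" by (rule inv_unique[OF \<open>W' ** S = mat 1\<close> S_inv])
  note K = key[OF W_eq[unfolded W'_def] G_eq]
  have K2: "\<And>X Y. cmsc (1/2) (X ** Rmh ** G ** Rmh ** Y) = X ** matrix_inv S ** Y"
    using K by (simp add: matrix_mul_assoc)
  show ?thesis
    unfolding Let_def
    using S_inv
    by (simp add: S_def[symmetric] G_def[symmetric] Rmh_def[symmetric] Rc_def[symmetric]
        K2 matrix_sub_ldistrib matrix_mul_assoc)
qed

end
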